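(* The bound $$\int_{-\infty}^s\int_{-\infty}^{s'} \exp \bigl(-a|r-r'| - b|r-s|-c|r'-s'|-d|r-s'|-e|r'-s|\bigr)\,dr'\,dr \le \frac{10\, e^{-(d\wedge e)|s-s'|}}{(b+d)(c+e) + a((b+d)\wedge(c+e))}$$ holds for every $s,s' \in \mathbb{R}$ and every $a,b,c,d,e > 0$. *)

theory Defs
  imports "HOL-Analysis.Analysis"
begin

end

theory Submission
  imports Defs
begin

lemma E0:
  fixes k :: real assumes "k > 0"
  shows "(\<integral>\<^sup>+x. ennreal (exp (-k*x)) * indicator {0..} x \<partial>lborel) = ennreal (1/k)"
  using nn_integral_has_integral_lebesgue'[OF _ has_integral_exp_minus_to_infinity[OF assms, of 0]]
  by simp

lemma E1:
  fixes k s :: real assumes "k > 0"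
  shows "(\<integral>\<^sup>+x\<in>{..s}. ennreal (exp (-k*(s-x))) \<partial>lborel) = ennreal (1/k)"
proof -
  have "(\<integral>\<^sup>+x. ennreal (exp (-k*(s-x))) * indicator {..s} x \<partial>lborel)
      = ennreal \<bar>-1\<bar> * (\<integral>\<^sup>+x. ennreal (exp (-k*(s-(s + (-1)*x)))) * indicator {..s} (s + (-1)*x) \<partial>lborel)"
    by (rule nn_integral_real_affine) auto
  also have "\<dots> = (\<integral>\<^sup>+x. ennreal (exp (-k*x)) * indicator {0..} x \<partial>lborel)"
    by (auto intro!: nn_integral_cong simp: indicator_def)
  finally show ?thesis using E0[OF assms] by simp
qed

lemma E1':
  fixes k s :: real assumes "k > 0"
  shows "(\<integral>\<^sup>+x\<in>{s..}. ennreal (exp (-k*(x-s))) \<partial>lborel) = ennreal (1/k)"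
proof -
  have "(\<integral>\<^sup>+x. ennreal (exp (-k*(x-s))) * indicator {s..} x \<partial>lborel)
      = ennreal \<bar>1\<bar> * (\<integral>\<^sup>+x. ennreal (exp (-k*((s + 1*x)-s))) * indicator {s..} (s + 1*x) \<partial>lborel)"
    by (rule nn_integral_real_affine) auto
  also have "\<dots> = (\<integral>\<^sup>+x. ennreal (exp (-k*x)) * indicator {0..} x \<partial>lborel)"
    by (auto intro!: nn_integral_cong simp: indicator_def)
  finally show ?thesis using E0[OF assms] by simp
qed

lemma E2:
  fixes k c :: real assumes "k > 0"
  shows "(\<integral>\<^sup>+x. ennreal (exp (-k*\<bar>x-c\<bar>)) \<partial>lborel) \<le> ennreal (2/k)"
proof -
  have "(\<integral>\<^sup>+x. ennreal (exp (-k*\<bar>x-c\<bar>)) \<partial>lborel) \<le>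
     (\<integral>\<^sup>+x. ennreal (exp (-k*(c-x))) * indicator {..c} x + ennreal (exp (-k*(x-c))) * indicator {c..} x \<partial>lborel)"
    by (intro nn_integral_mono) (auto simp: indicator_def abs_if)
  also have "\<dots> = (\<integral>\<^sup>+x\<in>{..c}. ennreal (exp (-k*(c-x))) \<partial>lborel) + (\<integral>\<^sup>+x\<in>{c..}. ennreal (exp (-k*(x-c))) \<partial>lborel)"
    by (intro nn_integral_add) auto
  also have "\<dots> = ennreal (1/k) + ennreal (1/k)" using E1[OF assms] E1'[OF assms] by simp
  also have "\<dots> = ennreal (2/k)" using assms by (simp flip: ennreal_plus)
  finally show ?thesis .
qed

lemma E2':
  fixes k c s' :: real assumes "k > 0"
  shows "(\<integral>\<^sup>+x\<in>{..s'}. ennreal (exp (-k*\<bar>x-c\<bar>)) \<partial>lborel) \<le> ennreal (2/k)"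
proof -
  have "(\<integral>\<^sup>+x\<in>{..s'}. ennreal (exp (-k*\<bar>x-c\<bar>)) \<partial>lborel) \<le> (\<integral>\<^sup>+x. ennreal (exp (-k*\<bar>x-c\<bar>)) \<partial>lborel)"
    by (intro nn_integral_mono) (auto simp: indicator_def)
  then show ?thesis by (rule order_trans[OF _ E2[OF assms]])
qed

lemma H:
  fixes E K1 K2 s s' :: real and F h :: "real \<Rightarrow> real \<Rightarrow> real" and k :: "real \<Rightarrow> real"
  assumes "E \<ge> 0" "K1 \<ge> 0" "K2 \<ge> 0"
    and Fb: "\<And>r r'. r \<le> s \<Longrightarrow> r' \<le> s' \<Longrightarrow> F r r' \<le> E * k r * h r r'"
    and hpos: "\<And>r r'. h r r' \<ge> 0" and kpos: "\<And>r. k r \<ge> 0"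
    and hm: "\<And>r. h r \<in> borel_measurable borel" and km: "k \<in> borel_measurable borel"
    and hi: "\<And>r. (\<integral>\<^sup>+r'\<in>{..s'}. ennreal (h r r') \<partial>lborel) \<le> ennreal K2"
    and ki: "(\<integral>\<^sup>+r\<in>{..s}. ennreal (k r) \<partial>lborel) \<le> ennreal K1"
  shows "(\<integral>\<^sup>+ r \<in> {..s}. (\<integral>\<^sup>+ r' \<in> {..s'}. ennreal (F r r') \<partial>lborel) \<partial>lborel) \<le> ennreal (E*K1*K2)"
proof -
  have Ek: "E * k r \<ge> 0" for r using assms(1) kpos[of r] by simp
  have inner: "(\<integral>\<^sup>+ r' \<in> {..s'}. ennreal (F r r') \<partial>lborel) \<le> ennreal (E*K2) * ennreal (k r)" if "r \<le> s" for r
  proof -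
    have pw: "ennreal (F r r') * indicator {..s'} r' \<le> ennreal (E * k r) * (ennreal (h r r') * indicator {..s'} r')" for r'
    proof (cases "r' \<le> s'")
      case True
      have "ennreal (F r r') \<le> ennreal (E * k r * h r r')" by (rule ennreal_leI, rule Fb[OF that True])
      also have "\<dots> = ennreal (E * k r) * ennreal (h r r')" by (rule ennreal_mult[OF Ek hpos])
      finally show ?thesis using True by simp
    qed simp
    have "(\<integral>\<^sup>+ r' \<in> {..s'}. ennreal (F r r') \<partial>lborel) \<le> (\<integral>\<^sup>+ r'. ennreal (E * k r) * (ennreal (h r r') * indicator {..s'} r') \<partial>lborel)"
      by (rule nn_integral_mono, rule pw)
    also have "\<dots> = ennreal (E * k r) * (\<integral>\<^sup>+ r' \<in> {..s'}. ennreal (h r r') \<partial>lborel)"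
      using hm[of r] by (intro nn_integral_cmult) simp
    also have "\<dots> \<le> ennreal (E * k r) * ennreal K2"
      by (rule mult_left_mono[OF hi]) simp
    also have "\<dots> = ennreal (E * k r * K2)" by (rule ennreal_mult[OF Ek assms(3), symmetric])
    also have "E * k r * K2 = (E * K2) * k r" by simp
    also have "ennreal \<dots> = ennreal (E*K2) * ennreal (k r)"
      using assms(1,3) kpos[of r] by (intro ennreal_mult) auto
    finally show ?thesis .
  qed
  have "(\<integral>\<^sup>+ r \<in> {..s}. (\<integral>\<^sup>+ r' \<in> {..s'}. ennreal (F r r') \<partial>lborel) \<partial>lborel)
      \<le> (\<integral>\<^sup>+ r. ennreal (E*K2) * (ennreal (k r) * indicator {..s} r) \<partial>lborel)"
  proof (rule nn_integral_mono)
    fix r show "(\<integral>\<^sup>+ r' \<in> {..s'}. ennreal (F r r') \<partial>lborel) * indicator {..s} r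
       \<le> ennreal (E*K2) * (ennreal (k r) * indicator {..s} r)"
      using inner[of r] by (cases "r \<le> s") simp_all
  qed
  also have "\<dots> = ennreal (E*K2) * (\<integral>\<^sup>+ r \<in> {..s}. ennreal (k r) \<partial>lborel)"
    using km by (intro nn_integral_cmult) simp
  also have "\<dots> \<le> ennreal (E*K2) * ennreal K1"
    by (rule mult_left_mono[OF ki]) simp
  also have "\<dots> = ennreal (E*K2*K1)" using assms(1-3) by (intro ennreal_mult[symmetric]) auto
  also have "E*K2*K1 = E*K1*K2" by simp
  finally show ?thesis .
qed

lemma fin:
  fixes E P D :: real
  assumes "0 \<le> E" "0 < P" "0 < D" "D \<le> 10*P"
  shows "E / P \<le> 10*E/D"
proof -
  have "1/P \<le> 10/D" using assms by (simp add: field_simps)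
  then have "E*(1/P) \<le> E*(10/D)" using assms(1) by (rule mult_left_mono)
  then show ?thesis by (simp add: mult.commute)
qed

theorem propositionA8:
  fixes s s' a b c d e :: real
  assumes "a > 0" "b > 0" "c > 0" "d > 0" "e > 0"
  shows "(\<integral>\<^sup>+ r \<in> {..s}. (\<integral>\<^sup>+ r' \<in> {..s'}.
            ennreal (exp (- a * \<bar>r - r'\<bar> - b * \<bar>r - s\<bar> - c * \<bar>r' - s'\<bar>
                          - d * \<bar>r - s'\<bar> - e * \<bar>r' - s\<bar>)) \<partial>lborel) \<partial>lborel)
         \<le> ennreal (10 * exp (- min d e * \<bar>s - s'\<bar>)
                 / ((b + d) * (c + e) + a * min (b + d) (c + e)))"
    (is "?I \<le> _")
proof -
  define E where "E = exp (- min d e * \<bar>s - s'\<bar>)"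
  define D where "D = (b + d) * (c + e) + a * min (b + d) (c + e)"
  define B where "B = b + d"
  define C where "C = c + e"
  have Bp: "B > 0" and Cp: "C > 0" using assms by (auto simp: B_def C_def)
  have "min (b + d) (c + e) > 0" using assms by simp
  then have Dp: "D > 0" using assms unfolding D_def by (intro add_pos_pos mult_pos_pos) auto
  have E0: "E \<ge> 0" by (simp add: E_def)
  have DB: "D \<le> B * (C + a)"
  proof -
    have "a * min B C \<le> a * B" using assms by (intro mult_left_mono) auto
    then show ?thesis by (simp add: D_def B_def C_def algebra_simps)
  qed
  have key: "?I \<le> ennreal (E*K1*K2)"
    if "K1 \<ge> 0" "K2 \<ge> 0"
      "\<And>r r'. r \<le> s \<Longrightarrow> r' \<le> s' \<Longrightarrow>
        exp (- a * \<bar>r - r'\<bar> - b * \<bar>r - s\<bar> - c * \<bar>r' - s'\<bar> - d * \<bar>r - s'\<bar> - e * \<bar>r' - s\<bar>)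
        \<le> E * k r * h r r'"
      "\<And>r r'. h r r' \<ge> 0" "\<And>r. k r \<ge> 0"
      "\<And>r. h r \<in> borel_measurable borel" "k \<in> borel_measurable borel"
      "\<And>r. (\<integral>\<^sup>+r'\<in>{..s'}. ennreal (h r r') \<partial>lborel) \<le> ennreal K2"
      "(\<integral>\<^sup>+r\<in>{..s}. ennreal (k r) \<partial>lborel) \<le> ennreal K1"
    for k :: "real \<Rightarrow> real" and h :: "real \<Rightarrow> real \<Rightarrow> real" and K1 K2 :: real
    by (rule H[OF E0 that(1,2)]) (rule that; assumption)+
  have goal: "?I \<le> ennreal (10 * E / D)" if "?I \<le> ennreal (E / P)" "0 < P" "D \<le> 10*P" for P
    using that(1) ennreal_leI[OF fin[OF E0 that(2) Dp that(3)]] by order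
  have ptw: "exp x \<le> E * exp u * exp v" if "x \<le> - min d e * \<bar>s - s'\<bar> + u + v" for x u v
    using that by (simp add: E_def flip: exp_add)
  have "?I \<le> ennreal (10 * E / D)"
  proof (cases "s \<le> s'")
    case True
    have ab: "\<bar>s - s'\<bar> = s' - s" using True by simp
    have "min d e * (s' - s) \<le> d * (s' - s)" using True by (intro mult_right_mono) auto
    then have master: "- a * \<bar>r - r'\<bar> - b * \<bar>r - s\<bar> - c * \<bar>r' - s'\<bar> - d * \<bar>r - s'\<bar> - e * \<bar>r' - s\<bar>
        \<le> - min d e * \<bar>s - s'\<bar> - B * (s - r) - a * \<bar>r' - r\<bar> - c * (s' - r') - e * \<bar>r' - s\<bar>"
      if "r \<le> s" "r' \<le> s'" for r r'
    proof -
      have "\<bar>r - s\<bar> = s - r" "\<bar>r' - s'\<bar> = s' - r'" "\<bar>r - s'\<bar> = (s' - s) + (s - r)" "\<bar>r - r'\<bar> = \<bar>r' - r\<bar>"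
        using that True by auto
      then show ?thesis using \<open>min d e * (s' - s) \<le> d * (s' - s)\<close>
        by (simp add: ab B_def algebra_simps)
    qed
    have nn: "a * \<bar>r' - r\<bar> \<ge> 0 \<and> c * (s' - r') \<ge> 0 \<and> e * \<bar>r' - s\<bar> \<ge> 0" if "r' \<le> s'" for r r'
      using assms that by auto
    have kI: "(\<integral>\<^sup>+r\<in>{..s}. ennreal (exp (- B * (s - r))) \<partial>lborel) \<le> ennreal (1/B)"
      using E1[OF Bp, of s] by simp
    have DB': "D \<le> B * (c + e + a)" using DB by (simp add: C_def)
    consider "e/2 \<le> c" "a/2 \<le> c" | "c < e/2" "a \<le> e" | "c < a/2" "e < a" by linarith
    then show ?thesis
    proof cases
      case 1
      have "B * (c + e + a) \<le> B * (5*c)" using 1 Bp by (intro mult_left_mono) auto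
      moreover have "B * (5*c) = 5 * (B*c)" by simp
      moreover have "B*c > 0" using Bp assms by simp
      ultimately have "D \<le> 10 * (B*c)" using DB' by linarith
      moreover have "?I \<le> ennreal (E * (1/B) * (1/c))"
        apply (rule key[where k="\<lambda>r. exp (- B * (s - r))" and h="\<lambda>r r'. exp (- c * (s' - r'))"])
        subgoal using Bp by simp
        subgoal using assms by simp
        subgoal for r r' by (rule ptw) (use master[of r r'] nn[of r' r] in auto)
        subgoal by simp
        subgoal by simp
        subgoal by measurable
        subgoal by measurable
        subgoal using E1[OF assms(3), where s=s'] by simp
        subgoal using kI by simp
        done
      ultimately show ?thesis using Bp assms by (intro goal[of "B*c"]) (simp_all add: field_simps)
    next
      case 2
      have "B * (c + e + a) \<le> B * (5*(e/2))" using 2 Bp by (intro mult_left_mono) auto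
      moreover have "B * (5*(e/2)) = 5 * (B*e/2)" by simp
      moreover have "B*e/2 > 0" using Bp assms by simp
      ultimately have "D \<le> 10 * (B*e/2)" using DB' by linarith
      moreover have "?I \<le> ennreal (E * (1/B) * (2/e))"
        apply (rule key[where k="\<lambda>r. exp (- B * (s - r))" and h="\<lambda>r r'. exp (- e * \<bar>r' - s\<bar>)"])
        subgoal using Bp by simp
        subgoal using assms by simp
        subgoal for r r' by (rule ptw) (use master[of r r'] nn[of r' r] in auto)
        subgoal by simp
        subgoal by simp
        subgoal by measurable
        subgoal by measurable
        subgoal using E2'[OF assms(5), where c=s and s'=s'] by simp
        subgoal using kI by simp
        done
      ultimately show ?thesis using Bp assms by (intro goal[of "B*e/2"]) (simp_all add: field_simps)
    next
      case 3
      have "B * (c + e + a) \<le> B * (5*(a/2))" using 3 Bp by (intro mult_left_mono) auto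
      moreover have "B * (5*(a/2)) = 5 * (B*a/2)" by simp
      moreover have "B*a/2 > 0" using Bp assms by simp
      ultimately have "D \<le> 10 * (B*a/2)" using DB' by linarith
      moreover have "?I \<le> ennreal (E * (1/B) * (2/a))"
        apply (rule key[where k="\<lambda>r. exp (- B * (s - r))" and h="\<lambda>r r'. exp (- a * \<bar>r' - r\<bar>)"])
        subgoal using Bp by simp
        subgoal using assms by simp
        subgoal for r r' by (rule ptw) (use master[of r r'] nn[of r' r] in auto)
        subgoal by simp
        subgoal by simp
        subgoal by measurable
        subgoal by measurable
        subgoal for r using E2'[OF assms(1), where c=r and s'=s'] by simp
        subgoal using kI by simp
        done
      ultimately show ?thesis using Bp assms by (intro goal[of "B*a/2"]) (simp_all add: field_simps)
    qed
  next
    case False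
    have ab: "\<bar>s - s'\<bar> = s - s'" using False by simp
    have "min d e * (s - s') \<le> e * (s - s')" using False by (intro mult_right_mono) auto
    then have master: "- a * \<bar>r - r'\<bar> - b * \<bar>r - s\<bar> - c * \<bar>r' - s'\<bar> - d * \<bar>r - s'\<bar> - e * \<bar>r' - s\<bar>
        \<le> - min d e * \<bar>s - s'\<bar> - b * (s - r) - d * \<bar>r - s'\<bar> - C * (s' - r') - a * \<bar>r' - r\<bar>"
      if "r \<le> s" "r' \<le> s'" for r r'
    proof -
      have "\<bar>r - s\<bar> = s - r" "\<bar>r' - s'\<bar> = s' - r'" "\<bar>r' - s\<bar> = (s - s') + (s' - r')" "\<bar>r - r'\<bar> = \<bar>r' - r\<bar>"
        using that False by auto
      then show ?thesis using \<open>min d e * (s - s') \<le> e * (s - s')\<close>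
        by (simp add: ab C_def algebra_simps)
    qed
    have nn: "b * (s - r) \<ge> 0 \<and> d * \<bar>r - s'\<bar> \<ge> 0 \<and> C * (s' - r') \<ge> 0 \<and> a * \<bar>r' - r\<bar> \<ge> 0" if "r \<le> s" "r' \<le> s'" for r r'
      using assms Cp that by auto
    consider "d \<le> 2*b" "a \<le> 2*C" | "2*b < d" "a \<le> 2*C" | "d \<le> 2*b" "2*C < a" | "2*b < d" "2*C < a" by linarith
    then show ?thesis
    proof cases
      case 1
      have "B \<le> 3*b" "C + a \<le> 3*C" using 1 by (auto simp: B_def C_def)
      then have "B * (C + a) \<le> (3*b) * (3*C)" using Bp Cp assms by (intro mult_mono) auto
      moreover have "(3*b) * (3*C) = 9/10 * (10 * (b*C))" by (simp add: algebra_simps)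
      moreover have "b*C > 0" using Cp assms by simp
      ultimately have "D \<le> 10 * (b*C)" using DB by linarith
      moreover have "?I \<le> ennreal (E * (1/b) * (1/C))"
        apply (rule key[where k="\<lambda>r. exp (- b * (s - r))" and h="\<lambda>r r'. exp (- C * (s' - r'))"])
        subgoal using assms Cp by simp
        subgoal using assms Cp by simp
        subgoal for r r' by (rule ptw) (use master[of r r'] nn[of r r'] in auto)
        subgoal by simp
        subgoal by simp
        subgoal by measurable
        subgoal by measurable
        subgoal using E1[OF Cp, where s=s'] by simp
        subgoal using E1[OF assms(2), where s=s] by simp
        done
      ultimately show ?thesis using Bp Cp assms
        by (intro goal[of "b*C"]) (simp_all add: field_simps)
    next
      case 2
      have "B \<le> 3*(d/2)" "C + a \<le> 3*C" using 2 by (auto simp: B_def C_def)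
      then have "B * (C + a) \<le> (3*(d/2)) * (3*C)" using Bp Cp assms by (intro mult_mono) auto
      moreover have "(3*(d/2)) * (3*C) = 9/10 * (10 * (d*C/2))" by (simp add: algebra_simps)
      moreover have "d*C/2 > 0" using Cp assms by simp
      ultimately have "D \<le> 10 * (d*C/2)" using DB by linarith
      moreover have "?I \<le> ennreal (E * (2/d) * (1/C))"
        apply (rule key[where k="\<lambda>r. exp (- d * \<bar>r - s'\<bar>)" and h="\<lambda>r r'. exp (- C * (s' - r'))"])
        subgoal using assms Cp by simp
        subgoal using assms Cp by simp
        subgoal for r r' by (rule ptw) (use master[of r r'] nn[of r r'] in auto)
        subgoal by simp
        subgoal by simp
        subgoal by measurable
        subgoal by measurable
        subgoal using E1[OF Cp, where s=s'] by simp
        subgoal using E2'[OF assms(4), where c=s' and s'=s] by simp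
        done
      ultimately show ?thesis using Bp Cp assms
        by (intro goal[of "d*C/2"]) (simp_all add: field_simps)
    next
      case 3
      have "B \<le> 3*b" "C + a \<le> 3*(a/2)" using 3 by (auto simp: B_def C_def)
      then have "B * (C + a) \<le> (3*b) * (3*(a/2))" using Bp Cp assms by (intro mult_mono) auto
      moreover have "(3*b) * (3*(a/2)) = 9/10 * (10 * (b*a/2))" by (simp add: algebra_simps)
      moreover have "b*a/2 > 0" using Cp assms by simp
      ultimately have "D \<le> 10 * (b*a/2)" using DB by linarith
      moreover have "?I \<le> ennreal (E * (1/b) * (2/a))"
        apply (rule key[where k="\<lambda>r. exp (- b * (s - r))" and h="\<lambda>r r'. exp (- a * \<bar>r' - r\<bar>)"])
        subgoal using assms Cp by simp
        subgoal using assms Cp by simp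
        subgoal for r r' by (rule ptw) (use master[of r r'] nn[of r r'] in auto)
        subgoal by simp
        subgoal by simp
        subgoal by measurable
        subgoal by measurable
        subgoal using E2'[OF assms(1), where s'=s'] by simp
        subgoal using E1[OF assms(2), where s=s] by simp
        done
      ultimately show ?thesis using Bp Cp assms
        by (intro goal[of "b*a/2"]) (simp_all add: field_simps)
    next
      case 4
      have "B \<le> 3*(d/2)" "C + a \<le> 3*(a/2)" using 4 by (auto simp: B_def C_def)
      then have "B * (C + a) \<le> (3*(d/2)) * (3*(a/2))" using Bp Cp assms by (intro mult_mono) auto
      moreover have "(3*(d/2)) * (3*(a/2)) = 9/10 * (10 * (d*a/4))" by (simp add: algebra_simps)
      moreover have "d*a/4 > 0" using Cp assms by simp
      ultimately have "D \<le> 10 * (d*a/4)" using DB by linarith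
      moreover have "?I \<le> ennreal (E * (2/d) * (2/a))"
        apply (rule key[where k="\<lambda>r. exp (- d * \<bar>r - s'\<bar>)" and h="\<lambda>r r'. exp (- a * \<bar>r' - r\<bar>)"])
        subgoal using assms Cp by simp
        subgoal using assms Cp by simp
        subgoal for r r' by (rule ptw) (use master[of r r'] nn[of r r'] in auto)
        subgoal by simp
        subgoal by simp
        subgoal by measurable
        subgoal by measurable
        subgoal using E2'[OF assms(1), where s'=s'] by simp
        subgoal using E2'[OF assms(4), where c=s' and s'=s] by simp
        done
      ultimately show ?thesis using Bp Cp assms
        by (intro goal[of "d*a/4"]) (simp_all add: field_simps)
    qed
  qed
  then show ?thesis by (simp add: E_def D_def)
qed

end
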